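(* Let $I$ be a nonempty real interval containing $0$ and let $f\colon I^n\to\mathbb{R}$. The following are equivalent: (i) $f$ is comonotonically modular; (ii) there exist a comonotonically modular $g\colon I_+^n\to\mathbb{R}$ and a comonotonically modular $h\colon I_-^n\to\mathbb{R}$ such that $f_0(\mathbf{x})=g_0(\mathbf{x}^+)+h_0(-\mathbf{x}^-)$ for every $\mathbf{x}\in I^n$; (iii) there exist $g\colon I_+^n\to\mathbb{R}$ and $h\colon I_-^n\to\mathbb{R}$ such that for every $\sigma\in S_n$ and every $\mathbf{x}\in I^n_\sigma$, $$f_0(\mathbf{x})=\sum_{1\leq i\leq p}\Big(h\big(x_{\sigma(i)}\mathbf{1}_{A^\downarrow_\sigma(i)}\big)-h\big(x_{\sigma(i)}\mathbf{1}_{A^\downarrow_\sigma(i-1)}\big)\Big)+\sum_{p+1\leq i\leq n}\Big(g\big(x_{\sigma(i)}\mathbf{1}_{A^\uparrow_\sigma(i)}\big)-g\big(x_{\sigma(i)}\mathbf{1}_{A^\uparrow_\sigma(i+1)}\big)\Big),$$ where $p\in\{0,\ldots,n\}$ is such that $x_{\sigma(p)}<0\leq x_{\sigma(p+1)}$ (with the conventions $x_{\sigma(0)}=-\infty$, $x_{\sigma(n+1)}=+\infty$). Moreover, in (ii) and (iii) one can take $g=f|_{I_+^n}$ and $h=f|_{I_-^n}$.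
   Context: Notation: $[n]=\{1,\ldots,n\}$; $S_n$ is the set of permutations of $[n]$; $I_+=I\cap[0,\infty[$, $I_-=I\cap\,]-\infty,0]$; $\mathbf{1}_A$ is the indicator tuple of $A\subseteq[n]$, $\mathbf{0}=\mathbf{1}_\varnothing$; for a function $u$ defined at $\mathbf{0}$, $u_0=u-u(\mathbf{0})$; $\mathbf{x}^+$ has components $\max(x_i,0)$ and $\mathbf{x}^-=(-\mathbf{x})^+$. For $\sigma\in S_n$, $\mathbb{R}^n_\sigma=\{\mathbf{x}: x_{\sigma(1)}\leq\cdots\leq x_{\sigma(n)}\}$, $I^n_\sigma=I^n\cap\mathbb{R}^n_\sigma$, $A^\uparrow_\sigma(i)=\{\sigma(i),\ldots,\sigma(n)\}$ with $A^\uparrow_\sigma(n+1)=\varnothing$, and $A^\downarrow_\sigma(i)=\{\sigma(1),\ldots,\sigma(i)\}$ with $A^\downarrow_\sigma(0)=\varnothing$. Two tuples in $J^n$ ($J$ an interval) are comonotonic if they both lie in $J^n\cap\mathbb{R}^n_\sigma$ for some $\sigma\in S_n$. A function $u\colon J^n\to\mathbb{R}$ is comonotonically modular if $u(\mathbf{x})+u(\mathbf{x}')=u(\mathbf{x}\wedge\mathbf{x}')+u(\mathbf{x}\vee\mathbf{x}')$ for all comonotonic $\mathbf{x},\mathbf{x}'\in J^n$, where $\wedge,\vee$ are componentwise min and max. *)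

theory Defs
  imports "HOL-Analysis.Analysis" "HOL-Combinatorics.Permutations"
begin

text \<open>Tuples in J^n are represented as functions nat => real whose relevant
  components are indexed by {1..n}; components outside {1..n} are fixed to 0,
  so that J^n corresponds bijectively to the set below.\<close>

definition cube :: "nat \<Rightarrow> real set \<Rightarrow> (nat \<Rightarrow> real) set" where
  "cube n J = {x. (\<forall>i\<in>{1..n}. x i \<in> J) \<and> (\<forall>i. i \<notin> {1..n} \<longrightarrow> x i = 0)}"

definition Ipos :: "real set \<Rightarrow> real set" where
  "Ipos I = I \<inter> {0..}"

definition Ineg :: "real set \<Rightarrow> real set" where
  "Ineg I = I \<inter> {..0}"

definition zerovec :: "nat \<Rightarrow> real" where
  "zerovec = (\<lambda>_. 0)"

definition shift0 :: "((nat \<Rightarrow> real) \<Rightarrow> real) \<Rightarrow> (nat \<Rightarrow> real) \<Rightarrow> real" where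
  "shift0 u x = u x - u zerovec"

definition vpos :: "(nat \<Rightarrow> real) \<Rightarrow> nat \<Rightarrow> real" where
  "vpos x = (\<lambda>i. max (x i) 0)"

definition vneg :: "(nat \<Rightarrow> real) \<Rightarrow> nat \<Rightarrow> real" where
  "vneg x = vpos (\<lambda>i. - x i)"

definition scind :: "real \<Rightarrow> nat set \<Rightarrow> nat \<Rightarrow> real" where
  "scind c A = (\<lambda>j. if j \<in> A then c else 0)"

definition sorted_by :: "nat \<Rightarrow> (nat \<Rightarrow> nat) \<Rightarrow> (nat \<Rightarrow> real) \<Rightarrow> bool" where
  "sorted_by n \<sigma> x = (\<forall>i j. 1 \<le> i \<and> i \<le> j \<and> j \<le> n \<longrightarrow> x (\<sigma> i) \<le> x (\<sigma> j))"

definition Aup :: "nat \<Rightarrow> (nat \<Rightarrow> nat) \<Rightarrow> nat \<Rightarrow> nat set" where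
  "Aup n \<sigma> i = \<sigma> ` {i..n}"

definition Adown :: "(nat \<Rightarrow> nat) \<Rightarrow> nat \<Rightarrow> nat set" where
  "Adown \<sigma> i = \<sigma> ` {1..i}"

definition comonotonic :: "nat \<Rightarrow> real set \<Rightarrow> (nat \<Rightarrow> real) \<Rightarrow> (nat \<Rightarrow> real) \<Rightarrow> bool" where
  "comonotonic n J x y =
     (\<exists>\<sigma>. \<sigma> permutes {1..n} \<and> x \<in> cube n J \<and> y \<in> cube n J
          \<and> sorted_by n \<sigma> x \<and> sorted_by n \<sigma> y)"

definition comod :: "nat \<Rightarrow> real set \<Rightarrow> ((nat \<Rightarrow> real) \<Rightarrow> real) \<Rightarrow> bool" where
  "comod n J u = (\<forall>x y. comonotonic n J x y \<longrightarrow>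
      u x + u y = u (\<lambda>i. min (x i) (y i)) + u (\<lambda>i. max (x i) (y i)))"

definition cond_ii :: "nat \<Rightarrow> real set \<Rightarrow> ((nat \<Rightarrow> real) \<Rightarrow> real) \<Rightarrow>
    ((nat \<Rightarrow> real) \<Rightarrow> real) \<Rightarrow> ((nat \<Rightarrow> real) \<Rightarrow> real) \<Rightarrow> bool" where
  "cond_ii n I f g h =
     (comod n (Ipos I) g \<and> comod n (Ineg I) h \<and>
      (\<forall>x\<in>cube n I. shift0 f x = shift0 g (vpos x) + shift0 h (\<lambda>i. - vneg x i)))"

definition cond_iii :: "nat \<Rightarrow> real set \<Rightarrow> ((nat \<Rightarrow> real) \<Rightarrow> real) \<Rightarrow>
    ((nat \<Rightarrow> real) \<Rightarrow> real) \<Rightarrow> ((nat \<Rightarrow> real) \<Rightarrow> real) \<Rightarrow> bool" where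
  "cond_iii n I f g h =
     (\<forall>\<sigma> x p. \<sigma> permutes {1..n} \<and> x \<in> cube n I \<and> sorted_by n \<sigma> x \<and> p \<le> n
        \<and> (p = 0 \<or> x (\<sigma> p) < 0) \<and> (p = n \<or> 0 \<le> x (\<sigma> (p + 1))) \<longrightarrow>
        shift0 f x =
          (\<Sum>i=1..p. h (scind (x (\<sigma> i)) (Adown \<sigma> i)) - h (scind (x (\<sigma> i)) (Adown \<sigma> (i - 1))))
        + (\<Sum>i=p+1..n. g (scind (x (\<sigma> i)) (Aup n \<sigma> i)) - g (scind (x (\<sigma> i)) (Aup n \<sigma> (i + 1)))))"

end

theory Submission
  imports Defs
begin

lemma exists_sorting:
  fixes x :: "nat \<Rightarrow> real"
  shows "\<exists>\<sigma>. \<sigma> permutes {1..n} \<and> sorted_by n \<sigma> x"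
proof -
  define xs where "xs = sort_key x [1..<Suc n]"
  have len: "length xs = n" by (simp add: xs_def)
  have dist: "distinct xs" by (simp add: xs_def)
  have setxs: "set xs = {1..n}" by (auto simp add: xs_def)
  have srt: "sorted (map x xs)" by (simp add: xs_def)
  define \<sigma> where "\<sigma> = (\<lambda>i. if i \<in> {1..n} then xs ! (i - 1) else i)"
  have img: "\<sigma> ` {1..n} = set xs"
  proof
    show "\<sigma> ` {1..n} \<subseteq> set xs" using len by (auto simp: \<sigma>_def)
    show "set xs \<subseteq> \<sigma> ` {1..n}"
    proof
      fix y assume "y \<in> set xs"
      then obtain k where k: "k < n" "xs ! k = y" using len by (auto simp: in_set_conv_nth)
      then have "\<sigma> (Suc k) = y" by (simp add: \<sigma>_def)
      then show "y \<in> \<sigma> ` {1..n}" using k by force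
    qed
  qed
  have inj: "inj_on \<sigma> {1..n}"
  proof (rule inj_onI)
    fix a b assume a: "a \<in> {1..n}" and b: "b \<in> {1..n}" and e: "\<sigma> a = \<sigma> b"
    then have "xs ! (a - 1) = xs ! (b - 1)" by (simp add: \<sigma>_def)
    then have "a - 1 = b - 1" using nth_eq_iff_index_eq[OF dist] a b len by force
    then show "a = b" using a b by auto
  qed
  have "bij_betw \<sigma> {1..n} {1..n}" using inj img setxs by (simp add: bij_betw_def)
  moreover have "\<And>y. y \<notin> {1..n} \<Longrightarrow> \<sigma> y = y" by (auto simp: \<sigma>_def)
  ultimately have "\<sigma> permutes {1..n}" by (rule bij_imp_permutes)
  moreover have "sorted_by n \<sigma> x"
    unfolding sorted_by_def
  proof (intro allI impI)
    fix i j assume h: "1 \<le> i \<and> i \<le> j \<and> j \<le> n"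
    have "(map x xs) ! (i - 1) \<le> (map x xs) ! (j - 1)"
      using sorted_nth_mono[OF srt, of "i - 1" "j - 1"] h len by auto
    moreover have "i - 1 < length xs" "j - 1 < length xs" using h len by auto
    ultimately show "x (\<sigma> i) \<le> x (\<sigma> j)" using h by (simp add: \<sigma>_def)
  qed
  ultimately show ?thesis by blast
qed

lemma tele_up: "m \<le> Suc k \<Longrightarrow> (\<Sum>i=m..k. F i - F (Suc i)) = F m - (F (Suc k) :: real)"
proof (induction k)
  case 0 then show ?case by (cases m) auto
next
  case (Suc k)
  then show ?case
    by (cases "m = Suc (Suc k)") (auto simp: sum.atLeast_Suc_atMost_Suc_shift)
qed

lemma tele_down: "(\<Sum>i=1..p. G i - G (i - 1)) = G (p::nat) - (G 0 :: real)"
  by (induction p) auto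

lemma cube_mono: "J \<subseteq> J' \<Longrightarrow> cube n J \<subseteq> cube n J'"
  unfolding cube_def by blast

lemma comod_mono: "J \<subseteq> J' \<Longrightarrow> comod n J' u \<Longrightarrow> comod n J u"
  unfolding comod_def comonotonic_def using cube_mono by blast

lemma perm_mem: "\<sigma> permutes {1..n} \<Longrightarrow> (\<sigma> i \<in> \<sigma> ` S) = (i \<in> S)"
  by (simp add: inj_image_mem_iff permutes_inj)

lemma perm_dec: "\<sigma> permutes {1..n} \<Longrightarrow> l \<in> {1..n} \<Longrightarrow> \<exists>j\<in>{1..n}. l = \<sigma> j"
proof -
  assume a: "\<sigma> permutes {1..n}" "l \<in> {1..n}"
  then have "l \<in> \<sigma> ` {1..n}" by (simp add: permutes_image)
  then show ?thesis by blast
qed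

lemma perm_out: "\<sigma> permutes {1..n} \<Longrightarrow> S \<subseteq> {1..n} \<Longrightarrow> l \<notin> {1..n} \<Longrightarrow> l \<notin> \<sigma> ` S"
proof -
  assume a: "\<sigma> permutes {1..n}" "S \<subseteq> {1..n}" "l \<notin> {1..n}"
  then have "\<sigma> ` S \<subseteq> \<sigma> ` {1..n}" by blast
  then have "\<sigma> ` S \<subseteq> {1..n}" using a by (simp add: permutes_image)
  then show ?thesis using a(3) by blast
qed

lemma perm_in: "\<sigma> permutes {1..n} \<Longrightarrow> j \<in> {1..n} \<Longrightarrow> \<sigma> j \<in> {1..n}"
proof -
  assume a: "\<sigma> permutes {1..n}" "j \<in> {1..n}"
  show ?thesis using permutes_in_image[OF a(1), of j] a(2) by (simp only:)
qed

lemma cube_out: "x \<in> cube n J \<Longrightarrow> l \<notin> {1..n} \<Longrightarrow> x l = 0"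
  unfolding cube_def by blast

lemma cube_in: "x \<in> cube n J \<Longrightarrow> l \<in> {1..n} \<Longrightarrow> x l \<in> J"
  unfolding cube_def by blast

lemma zerovec_cube: "0 \<in> J \<Longrightarrow> zerovec \<in> cube n J"
  unfolding cube_def zerovec_def by auto

lemma zerovec_sorted: "sorted_by n \<sigma> zerovec"
  unfolding sorted_by_def zerovec_def by auto

lemma comod_zero:
  assumes "comod n I f" "x \<in> cube n I" "0 \<in> I"
  shows "f x + f zerovec = f (\<lambda>i. - vneg x i) + f (vpos x)"
proof -
  obtain \<sigma> where s: "\<sigma> permutes {1..n}" "sorted_by n \<sigma> x" using exists_sorting by blast
  have "comonotonic n I x zerovec"
    unfolding comonotonic_def using s assms zerovec_cube zerovec_sorted by blast
  then have "f x + f zerovec = f (\<lambda>i. min (x i) (zerovec i)) + f (\<lambda>i. max (x i) (zerovec i))"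
    using assms(1) unfolding comod_def by blast
  moreover have "(\<lambda>i. min (x i) (zerovec i)) = (\<lambda>i. - vneg x i)"
    by (auto simp: zerovec_def vneg_def vpos_def)
  moreover have "(\<lambda>i. max (x i) (zerovec i)) = vpos x"
    by (auto simp: zerovec_def vpos_def)
  ultimately show ?thesis by simp
qed

lemma fun_eq_perm:
  assumes s: "\<sigma> permutes {1..n}"
    and inside: "\<And>j. j \<in> {1..n} \<Longrightarrow> F (\<sigma> j) = G (\<sigma> j)"
    and outside: "\<And>l. l \<notin> {1..n} \<Longrightarrow> F l = G l"
  shows "F = G"
proof
  fix l show "F l = G l"
  proof (cases "l \<in> {1..n}")
    case True then obtain j where "j \<in> {1..n}" "l = \<sigma> j" using perm_dec[OF s] by blast
    then show ?thesis using inside by simp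
  qed (use outside in auto)
qed

lemma up_step:
  assumes comod: "comod n I f" and s: "\<sigma> permutes {1..n}" and x: "x \<in> cube n I" "sorted_by n \<sigma> x"
    and k: "1 \<le> k" "k \<le> n" and nn: "0 \<le> x (\<sigma> k)" and I0: "0 \<in> I"
  shows "f (\<lambda>l. if l \<in> Aup n \<sigma> k then x l else 0) - f (\<lambda>l. if l \<in> Aup n \<sigma> (Suc k) then x l else 0)
       = f (scind (x (\<sigma> k)) (Aup n \<sigma> k)) - f (scind (x (\<sigma> k)) (Aup n \<sigma> (Suc k)))"
proof -
  define c where "c = x (\<sigma> k)"
  define a where "a = (\<lambda>l. if l \<in> Aup n \<sigma> (Suc k) then x l else 0)"
  define b where "b = scind c (Aup n \<sigma> k)"
  have ge: "\<And>j. k \<le> j \<Longrightarrow> j \<le> n \<Longrightarrow> c \<le> x (\<sigma> j)"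
    using x(2) k unfolding sorted_by_def c_def by auto
  have cI: "c \<in> I" unfolding c_def using cube_in[OF x(1)] perm_in[OF s] k by auto
  have mem: "\<And>j m. (\<sigma> j \<in> Aup n \<sigma> m) = (m \<le> j \<and> j \<le> n)"
    unfolding Aup_def using perm_mem[OF s] by auto
  have out: "\<And>l m. 1 \<le> m \<Longrightarrow> l \<notin> {1..n} \<Longrightarrow> l \<notin> Aup n \<sigma> m"
    unfolding Aup_def using perm_out[OF s] by auto
  have a_cube: "a \<in> cube n I" using x(1) I0 unfolding a_def cube_def by auto
  have b_cube: "b \<in> cube n I" using cI I0 out k unfolding b_def cube_def scind_def by auto
  have a_sorted: "sorted_by n \<sigma> a"
    unfolding sorted_by_def a_def mem
  proof (intro allI impI)
    fix i j assume h: "1 \<le> i \<and> i \<le> j \<and> j \<le> n"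
    have "x (\<sigma> i) \<le> x (\<sigma> j)" using x(2) h unfolding sorted_by_def by blast
    moreover have "Suc k \<le> j \<Longrightarrow> 0 \<le> x (\<sigma> j)" using ge[of j] nn h unfolding c_def by linarith
    ultimately show "(if Suc k \<le> i \<and> i \<le> n then x (\<sigma> i) else 0) \<le> (if Suc k \<le> j \<and> j \<le> n then x (\<sigma> j) else 0)"
      using h by auto
  qed
  have b_sorted: "sorted_by n \<sigma> b"
    unfolding sorted_by_def b_def scind_def mem using nn c_def by auto
  have "comonotonic n I a b" unfolding comonotonic_def using s a_cube b_cube a_sorted b_sorted by blast
  then have eq: "f a + f b = f (\<lambda>i. min (a i) (b i)) + f (\<lambda>i. max (a i) (b i))"
    using comod unfolding comod_def by blast
  have m1: "(\<lambda>i. min (a i) (b i)) = scind c (Aup n \<sigma> (Suc k))"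
  proof (rule fun_eq_perm[OF s])
    fix j assume j: "j \<in> {1..n}"
    show "min (a (\<sigma> j)) (b (\<sigma> j)) = scind c (Aup n \<sigma> (Suc k)) (\<sigma> j)"
      unfolding a_def b_def scind_def mem using ge[of j] nn j c_def by auto
  next
    fix l assume "l \<notin> {1..n}"
    then show "min (a l) (b l) = scind c (Aup n \<sigma> (Suc k)) l"
      unfolding a_def b_def scind_def using out k by auto
  qed
  have m2: "(\<lambda>i. max (a i) (b i)) = (\<lambda>l. if l \<in> Aup n \<sigma> k then x l else 0)"
  proof (rule fun_eq_perm[OF s])
    fix j assume j: "j \<in> {1..n}"
    show "max (a (\<sigma> j)) (b (\<sigma> j)) = (if \<sigma> j \<in> Aup n \<sigma> k then x (\<sigma> j) else 0)"
      unfolding a_def b_def scind_def mem using ge[of j] nn j c_def by (cases "j = k") auto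
  next
    fix l assume "l \<notin> {1..n}"
    then show "max (a l) (b l) = (if l \<in> Aup n \<sigma> k then x l else 0)"
      unfolding a_def b_def scind_def using out k by auto
  qed
  show ?thesis using eq unfolding m1 m2 unfolding a_def b_def c_def by linarith
qed

lemma down_step:
  assumes comod: "comod n I f" and s: "\<sigma> permutes {1..n}" and x: "x \<in> cube n I" "sorted_by n \<sigma> x"
    and k: "1 \<le> k" "k \<le> n" and ng: "x (\<sigma> k) < 0" and I0: "0 \<in> I"
  shows "f (\<lambda>l. if l \<in> Adown \<sigma> k then x l else 0) - f (\<lambda>l. if l \<in> Adown \<sigma> (k - 1) then x l else 0)
       = f (scind (x (\<sigma> k)) (Adown \<sigma> k)) - f (scind (x (\<sigma> k)) (Adown \<sigma> (k - 1)))"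
proof -
  define c where "c = x (\<sigma> k)"
  define a where "a = (\<lambda>l. if l \<in> Adown \<sigma> (k - 1) then x l else 0)"
  define b where "b = scind c (Adown \<sigma> k)"
  have le: "\<And>j. 1 \<le> j \<Longrightarrow> j \<le> k \<Longrightarrow> x (\<sigma> j) \<le> c"
    using x(2) k unfolding sorted_by_def c_def by auto
  have cI: "c \<in> I" unfolding c_def using cube_in[OF x(1)] perm_in[OF s] k by auto
  have mem: "\<And>j m. (\<sigma> j \<in> Adown \<sigma> m) = (1 \<le> j \<and> j \<le> m)"
    unfolding Adown_def using perm_mem[OF s] by auto
  have out: "\<And>l m. m \<le> n \<Longrightarrow> l \<notin> {1..n} \<Longrightarrow> l \<notin> Adown \<sigma> m"
    unfolding Adown_def using perm_out[OF s] by auto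
  have a_cube: "a \<in> cube n I" using x(1) I0 unfolding a_def cube_def by auto
  have b_cube: "b \<in> cube n I" using cI I0 out k unfolding b_def cube_def scind_def by auto
  have a_sorted: "sorted_by n \<sigma> a"
    unfolding sorted_by_def a_def mem
  proof (intro allI impI)
    fix i j assume h: "1 \<le> i \<and> i \<le> j \<and> j \<le> n"
    have "x (\<sigma> i) \<le> x (\<sigma> j)" using x(2) h unfolding sorted_by_def by blast
    moreover have "i \<le> k - 1 \<Longrightarrow> x (\<sigma> i) \<le> 0" using le[of i] ng h unfolding c_def by fastforce
    ultimately show "(if 1 \<le> i \<and> i \<le> k - 1 then x (\<sigma> i) else 0) \<le> (if 1 \<le> j \<and> j \<le> k - 1 then x (\<sigma> j) else 0)"
      using h by auto
  qed
  have b_sorted: "sorted_by n \<sigma> b"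
    unfolding sorted_by_def b_def scind_def mem using ng c_def by auto
  have "comonotonic n I a b" unfolding comonotonic_def using s a_cube b_cube a_sorted b_sorted by blast
  then have eq: "f a + f b = f (\<lambda>i. min (a i) (b i)) + f (\<lambda>i. max (a i) (b i))"
    using comod unfolding comod_def by blast
  have m1: "(\<lambda>i. min (a i) (b i)) = (\<lambda>l. if l \<in> Adown \<sigma> k then x l else 0)"
  proof (rule fun_eq_perm[OF s])
    fix j assume j: "j \<in> {1..n}"
    show "min (a (\<sigma> j)) (b (\<sigma> j)) = (if \<sigma> j \<in> Adown \<sigma> k then x (\<sigma> j) else 0)"
      unfolding a_def b_def scind_def mem using le[of j] ng j c_def by (cases "j = k") auto
  next
    fix l assume "l \<notin> {1..n}"
    then show "min (a l) (b l) = (if l \<in> Adown \<sigma> k then x l else 0)"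
      unfolding a_def b_def scind_def using out k by auto
  qed
  have m2: "(\<lambda>i. max (a i) (b i)) = scind c (Adown \<sigma> (k - 1))"
  proof (rule fun_eq_perm[OF s])
    fix j assume j: "j \<in> {1..n}"
    show "max (a (\<sigma> j)) (b (\<sigma> j)) = scind c (Adown \<sigma> (k - 1)) (\<sigma> j)"
      unfolding a_def b_def scind_def mem using le[of j] ng j c_def by (cases "j = k") auto
  next
    fix l assume "l \<notin> {1..n}"
    then show "max (a l) (b l) = scind c (Adown \<sigma> (k - 1)) l"
      unfolding a_def b_def scind_def using out k by auto
  qed
  show ?thesis using eq unfolding m1 m2 unfolding a_def b_def c_def by linarith
qed

lemma comod_iii:
  assumes comod: "comod n I f" and I0: "0 \<in> I"
  shows "cond_iii n I f f f"
  unfolding cond_iii_def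
proof (intro allI impI, elim conjE)
  fix \<sigma> x p
  assume s: "\<sigma> permutes {1..n}" and xc: "x \<in> cube n I" and xs: "sorted_by n \<sigma> x" and pn: "p \<le> n"
    and p1: "p = 0 \<or> x (\<sigma> p) < 0" and p2: "p = n \<or> 0 \<le> x (\<sigma> (p + 1))"
  have pos: "\<And>j. p + 1 \<le> j \<Longrightarrow> j \<le> n \<Longrightarrow> 0 \<le> x (\<sigma> j)"
  proof -
    fix j assume j: "p + 1 \<le> j" "j \<le> n"
    then have "p \<noteq> n" by auto
    then have "0 \<le> x (\<sigma> (p + 1))" using p2 by auto
    moreover have "x (\<sigma> (p + 1)) \<le> x (\<sigma> j)" using xs j unfolding sorted_by_def by auto
    ultimately show "0 \<le> x (\<sigma> j)" by linarith
  qed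
  have neg: "\<And>j. 1 \<le> j \<Longrightarrow> j \<le> p \<Longrightarrow> x (\<sigma> j) < 0"
  proof -
    fix j assume j: "1 \<le> j" "j \<le> p"
    then have "p \<noteq> 0" by auto
    then have "x (\<sigma> p) < 0" using p1 by auto
    moreover have "x (\<sigma> j) \<le> x (\<sigma> p)" using xs j pn unfolding sorted_by_def by auto
    ultimately show "x (\<sigma> j) < 0" by linarith
  qed
  define W where "W = (\<lambda>k l. if l \<in> Aup n \<sigma> k then x l else (0::real))"
  define V where "V = (\<lambda>k l. if l \<in> Adown \<sigma> k then x l else (0::real))"
  have memu: "\<And>j m. (\<sigma> j \<in> Aup n \<sigma> m) = (m \<le> j \<and> j \<le> n)"
    unfolding Aup_def using perm_mem[OF s] by auto
  have outu: "\<And>l m. 1 \<le> m \<Longrightarrow> l \<notin> {1..n} \<Longrightarrow> l \<notin> Aup n \<sigma> m"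
    unfolding Aup_def using perm_out[OF s] by auto
  have memd: "\<And>j m. (\<sigma> j \<in> Adown \<sigma> m) = (1 \<le> j \<and> j \<le> m)"
    unfolding Adown_def using perm_mem[OF s] by auto
  have outd: "\<And>l m. m \<le> n \<Longrightarrow> l \<notin> {1..n} \<Longrightarrow> l \<notin> Adown \<sigma> m"
    unfolding Adown_def using perm_out[OF s] by auto
  have "(\<Sum>i=p+1..n. f (scind (x (\<sigma> i)) (Aup n \<sigma> i)) - f (scind (x (\<sigma> i)) (Aup n \<sigma> (i + 1))))
      = (\<Sum>i=p+1..n. f (W i) - f (W (Suc i)))"
  proof (rule sum.cong)
    fix i assume "i \<in> {p+1..n}"
    then show "f (scind (x (\<sigma> i)) (Aup n \<sigma> i)) - f (scind (x (\<sigma> i)) (Aup n \<sigma> (i + 1)))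
      = f (W i) - f (W (Suc i))"
      using up_step[OF comod s xc xs _ _ _ I0, of i] pos[of i] unfolding W_def by auto
  qed simp
  also have "\<dots> = f (W (p + 1)) - f (W (Suc n))" using tele_up[of "p+1" n "\<lambda>i. f (W i)"] pn by simp
  also have "W (Suc n) = zerovec" unfolding W_def Aup_def zerovec_def by auto
  also have "W (p + 1) = vpos x"
  proof (rule fun_eq_perm[OF s])
    fix j assume j: "j \<in> {1..n}"
    show "W (p + 1) (\<sigma> j) = vpos x (\<sigma> j)"
      unfolding W_def vpos_def memu using pos[of j] neg[of j] j by (cases "p + 1 \<le> j") auto
  next
    fix l assume "l \<notin> {1..n}"
    then show "W (p + 1) l = vpos x l" unfolding W_def vpos_def using outu cube_out[OF xc] by auto
  qed
  finally have up: "(\<Sum>i=p+1..n. f (scind (x (\<sigma> i)) (Aup n \<sigma> i)) - f (scind (x (\<sigma> i)) (Aup n \<sigma> (i + 1))))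
      = f (vpos x) - f zerovec" .
  have "(\<Sum>i=1..p. f (scind (x (\<sigma> i)) (Adown \<sigma> i)) - f (scind (x (\<sigma> i)) (Adown \<sigma> (i - 1))))
      = (\<Sum>i=1..p. f (V i) - f (V (i - 1)))"
  proof (rule sum.cong)
    fix i assume "i \<in> {1..p}"
    then show "f (scind (x (\<sigma> i)) (Adown \<sigma> i)) - f (scind (x (\<sigma> i)) (Adown \<sigma> (i - 1)))
      = f (V i) - f (V (i - 1))"
      using down_step[OF comod s xc xs _ _ _ I0, of i] neg[of i] pn unfolding V_def by auto
  qed simp
  also have "\<dots> = f (V p) - f (V 0)" using tele_down[of "\<lambda>i. f (V i)" p] by simp
  also have "V 0 = zerovec" unfolding V_def Adown_def zerovec_def by auto
  also have "V p = (\<lambda>i. - vneg x i)"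
  proof (rule fun_eq_perm[OF s])
    fix j assume j: "j \<in> {1..n}"
    show "V p (\<sigma> j) = - vneg x (\<sigma> j)"
      unfolding V_def vneg_def vpos_def memd using pos[of j] neg[of j] j by (cases "j \<le> p") auto
  next
    fix l assume "l \<notin> {1..n}"
    then show "V p l = - vneg x l" unfolding V_def vneg_def vpos_def using outd pn cube_out[OF xc] by auto
  qed
  finally have down: "(\<Sum>i=1..p. f (scind (x (\<sigma> i)) (Adown \<sigma> i)) - f (scind (x (\<sigma> i)) (Adown \<sigma> (i - 1))))
      = f (\<lambda>i. - vneg x i) - f zerovec" .
  have "f x + f zerovec = f (\<lambda>i. - vneg x i) + f (vpos x)" using comod_zero[OF comod xc I0] .
  then show "shift0 f x =
          (\<Sum>i=1..p. f (scind (x (\<sigma> i)) (Adown \<sigma> i)) - f (scind (x (\<sigma> i)) (Adown \<sigma> (i - 1))))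
        + (\<Sum>i=p+1..n. f (scind (x (\<sigma> i)) (Aup n \<sigma> i)) - f (scind (x (\<sigma> i)) (Aup n \<sigma> (i + 1))))"
    unfolding up down shift0_def by linarith
qed

lemma vpos_cube: "x \<in> cube n I \<Longrightarrow> 0 \<in> I \<Longrightarrow> vpos x \<in> cube n (Ipos I)"
  unfolding cube_def vpos_def Ipos_def by (auto simp: max_def)

lemma vneg_cube: "x \<in> cube n I \<Longrightarrow> 0 \<in> I \<Longrightarrow> (\<lambda>i. - vneg x i) \<in> cube n (Ineg I)"
  unfolding cube_def vneg_def vpos_def Ineg_def by (auto simp: max_def)

lemma vpos_sorted: "sorted_by n \<sigma> x \<Longrightarrow> sorted_by n \<sigma> (vpos x)"
  unfolding sorted_by_def vpos_def by (meson max.mono order_refl)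

lemma vneg_sorted: "sorted_by n \<sigma> x \<Longrightarrow> sorted_by n \<sigma> (\<lambda>i. - vneg x i)"
  unfolding sorted_by_def vneg_def vpos_def by fastforce

lemma min_cube: "x \<in> cube n I \<Longrightarrow> y \<in> cube n I \<Longrightarrow> (\<lambda>i. min (x i) (y i)) \<in> cube n I"
  unfolding cube_def by (auto simp: min_def)

lemma max_cube: "x \<in> cube n I \<Longrightarrow> y \<in> cube n I \<Longrightarrow> (\<lambda>i. max (x i) (y i)) \<in> cube n I"
  unfolding cube_def by (auto simp: max_def)

lemma min_sorted: "sorted_by n \<sigma> x \<Longrightarrow> sorted_by n \<sigma> y \<Longrightarrow> sorted_by n \<sigma> (\<lambda>i. min (x i) (y i))"
  unfolding sorted_by_def by (meson min.mono)

lemma max_sorted: "sorted_by n \<sigma> x \<Longrightarrow> sorted_by n \<sigma> y \<Longrightarrow> sorted_by n \<sigma> (\<lambda>i. max (x i) (y i))"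
  unfolding sorted_by_def by (meson max.mono)

lemma ii_comod:
  assumes c: "cond_ii n I f g h" and I0: "0 \<in> I"
  shows "comod n I f"
  unfolding comod_def
proof (intro allI impI)
  fix x y assume "comonotonic n I x y"
  then obtain \<sigma> where s: "\<sigma> permutes {1..n}" and xc: "x \<in> cube n I" and yc: "y \<in> cube n I"
    and xs: "sorted_by n \<sigma> x" and ys: "sorted_by n \<sigma> y" unfolding comonotonic_def by blast
  define m where "m = (\<lambda>i. min (x i) (y i))"
  define M where "M = (\<lambda>i. max (x i) (y i))"
  have mc: "m \<in> cube n I" "M \<in> cube n I" using min_cube[OF xc yc] max_cube[OF xc yc] m_def M_def by auto
  have gc: "comod n (Ipos I) g" and hc: "comod n (Ineg I) h"
    and eq: "\<And>z. z \<in> cube n I \<Longrightarrow> shift0 f z = shift0 g (vpos z) + shift0 h (\<lambda>i. - vneg z i)"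
    using c unfolding cond_ii_def by auto
  have "comonotonic n (Ipos I) (vpos x) (vpos y)" unfolding comonotonic_def
    using s vpos_cube[OF xc I0] vpos_cube[OF yc I0] vpos_sorted[OF xs] vpos_sorted[OF ys] by blast
  then have G: "g (vpos x) + g (vpos y) = g (\<lambda>i. min (vpos x i) (vpos y i)) + g (\<lambda>i. max (vpos x i) (vpos y i))"
    using gc unfolding comod_def by blast
  have "comonotonic n (Ineg I) (\<lambda>i. - vneg x i) (\<lambda>i. - vneg y i)" unfolding comonotonic_def
    using s vneg_cube[OF xc I0] vneg_cube[OF yc I0] vneg_sorted[OF xs] vneg_sorted[OF ys] by blast
  then have H: "h (\<lambda>i. - vneg x i) + h (\<lambda>i. - vneg y i) = h (\<lambda>i. min (- vneg x i) (- vneg y i)) + h (\<lambda>i. max (- vneg x i) (- vneg y i))"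
    using hc unfolding comod_def by blast
  have e1: "(\<lambda>i. min (vpos x i) (vpos y i)) = vpos m" unfolding m_def vpos_def by (auto simp: fun_eq_iff min_def max_def)
  have e2: "(\<lambda>i. max (vpos x i) (vpos y i)) = vpos M" unfolding M_def vpos_def by (auto simp: fun_eq_iff min_def max_def)
  have e3: "(\<lambda>i. min (- vneg x i) (- vneg y i)) = (\<lambda>i. - vneg m i)" unfolding m_def vneg_def vpos_def by (auto simp: fun_eq_iff min_def max_def)
  have e4: "(\<lambda>i. max (- vneg x i) (- vneg y i)) = (\<lambda>i. - vneg M i)" unfolding M_def vneg_def vpos_def by (auto simp: fun_eq_iff min_def max_def)
  show "f x + f y = f (\<lambda>i. min (x i) (y i)) + f (\<lambda>i. max (x i) (y i))"
    using G H eq[OF xc] eq[OF yc] eq[OF mc(1)] eq[OF mc(2)] unfolding e1 e2 e3 e4 m_def[symmetric] M_def[symmetric] shift0_def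
    by linarith
qed

lemma comod_ii:
  assumes comod: "comod n I f" and I0: "0 \<in> I"
  shows "cond_ii n I f f f"
  unfolding cond_ii_def
proof (intro conjI ballI)
  show "comod n (Ipos I) f" using comod_mono[OF _ comod] unfolding Ipos_def by blast
  show "comod n (Ineg I) f" using comod_mono[OF _ comod] unfolding Ineg_def by blast
  fix x assume "x \<in> cube n I"
  from comod_zero[OF comod this I0] show "shift0 f x = shift0 f (vpos x) + shift0 f (\<lambda>i. - vneg x i)"
    unfolding shift0_def by linarith
qed

definition phi :: "((nat \<Rightarrow> real) \<Rightarrow> real) \<Rightarrow> ((nat \<Rightarrow> real) \<Rightarrow> real) \<Rightarrow> nat \<Rightarrow> (nat \<Rightarrow> nat) \<Rightarrow> nat \<Rightarrow> real \<Rightarrow> real" where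
  "phi g h n \<sigma> i t = (if t < 0 then h (scind t (Adown \<sigma> i)) - h (scind t (Adown \<sigma> (i - 1)))
     else g (scind t (Aup n \<sigma> i)) - g (scind t (Aup n \<sigma> (i + 1))))"

lemma iii_sum:
  assumes c: "cond_iii n I f g h" and s: "\<sigma> permutes {1..n}" and zc: "z \<in> cube n I" and zs: "sorted_by n \<sigma> z"
  shows "shift0 f z = (\<Sum>i=1..n. phi g h n \<sigma> i (z (\<sigma> i)))"
proof -
  define S where "S = {0} \<union> {i\<in>{1..n}. z (\<sigma> i) < 0}"
  define p where "p = Max S"
  have fin: "finite S" unfolding S_def by auto
  have pS: "p \<in> S" unfolding p_def by (rule Max_in[OF fin]) (simp add: S_def)
  have pn: "p \<le> n" using pS unfolding S_def by auto
  have p1: "p = 0 \<or> z (\<sigma> p) < 0" using pS unfolding S_def by auto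
  have p2: "p = n \<or> 0 \<le> z (\<sigma> (p + 1))"
  proof (rule ccontr)
    assume "\<not> ?thesis"
    then have "p + 1 \<in> S" using pn unfolding S_def by auto
    then have "p + 1 \<le> p" unfolding p_def using fin by simp
    then show False by simp
  qed
  have pos: "\<And>j. p + 1 \<le> j \<Longrightarrow> j \<le> n \<Longrightarrow> 0 \<le> z (\<sigma> j)"
  proof -
    fix j assume j: "p + 1 \<le> j" "j \<le> n"
    then have "p \<noteq> n" by auto
    then have "0 \<le> z (\<sigma> (p + 1))" using p2 by auto
    moreover have "z (\<sigma> (p + 1)) \<le> z (\<sigma> j)" using zs j unfolding sorted_by_def by auto
    ultimately show "0 \<le> z (\<sigma> j)" by linarith
  qed
  have neg: "\<And>j. 1 \<le> j \<Longrightarrow> j \<le> p \<Longrightarrow> z (\<sigma> j) < 0"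
  proof -
    fix j assume j: "1 \<le> j" "j \<le> p"
    then have "p \<noteq> 0" by auto
    then have "z (\<sigma> p) < 0" using p1 by auto
    moreover have "z (\<sigma> j) \<le> z (\<sigma> p)" using zs j pn unfolding sorted_by_def by auto
    ultimately show "z (\<sigma> j) < 0" by linarith
  qed
  have "shift0 f z =
          (\<Sum>i=1..p. h (scind (z (\<sigma> i)) (Adown \<sigma> i)) - h (scind (z (\<sigma> i)) (Adown \<sigma> (i - 1))))
        + (\<Sum>i=p+1..n. g (scind (z (\<sigma> i)) (Aup n \<sigma> i)) - g (scind (z (\<sigma> i)) (Aup n \<sigma> (i + 1))))"
    using c s zc zs pn p1 p2 unfolding cond_iii_def by blast
  also have "(\<Sum>i=1..p. h (scind (z (\<sigma> i)) (Adown \<sigma> i)) - h (scind (z (\<sigma> i)) (Adown \<sigma> (i - 1))))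
      = (\<Sum>i=1..p. phi g h n \<sigma> i (z (\<sigma> i)))"
    by (rule sum.cong) (auto simp: phi_def neg)
  also have "(\<Sum>i=p+1..n. g (scind (z (\<sigma> i)) (Aup n \<sigma> i)) - g (scind (z (\<sigma> i)) (Aup n \<sigma> (i + 1))))
      = (\<Sum>i=p+1..n. phi g h n \<sigma> i (z (\<sigma> i)))"
  proof (rule sum.cong)
    fix i assume "i \<in> {p+1..n}"
    then have "\<not> z (\<sigma> i) < 0" using pos[of i] by auto
    then show "g (scind (z (\<sigma> i)) (Aup n \<sigma> i)) - g (scind (z (\<sigma> i)) (Aup n \<sigma> (i + 1))) = phi g h n \<sigma> i (z (\<sigma> i))"
      by (simp add: phi_def)
  qed simp
  also have "(\<Sum>i=1..p. phi g h n \<sigma> i (z (\<sigma> i))) + (\<Sum>i=p+1..n. phi g h n \<sigma> i (z (\<sigma> i)))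
      = (\<Sum>i=1..n. phi g h n \<sigma> i (z (\<sigma> i)))"
  proof -
    have "{1..n} = {1..p} \<union> {p+1..n}" using pn by auto
    moreover have "{1..p} \<inter> {p+1..n} = {}" by auto
    ultimately show ?thesis by (simp add: sum.union_disjoint)
  qed
  finally show ?thesis .
qed

lemma iii_comod:
  assumes c: "cond_iii n I f g h"
  shows "comod n I f"
  unfolding comod_def
proof (intro allI impI)
  fix x y assume "comonotonic n I x y"
  then obtain \<sigma> where s: "\<sigma> permutes {1..n}" and xc: "x \<in> cube n I" and yc: "y \<in> cube n I"
    and xs: "sorted_by n \<sigma> x" and ys: "sorted_by n \<sigma> y" unfolding comonotonic_def by blast
  define m where "m = (\<lambda>i. min (x i) (y i))"
  define M where "M = (\<lambda>i. max (x i) (y i))"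
  have mc: "m \<in> cube n I" "M \<in> cube n I" using min_cube[OF xc yc] max_cube[OF xc yc] m_def M_def by auto
  have ms: "sorted_by n \<sigma> m" "sorted_by n \<sigma> M" using min_sorted[OF xs ys] max_sorted[OF xs ys] m_def M_def by auto
  have pt: "\<And>i. phi g h n \<sigma> i (x (\<sigma> i)) + phi g h n \<sigma> i (y (\<sigma> i))
      = phi g h n \<sigma> i (m (\<sigma> i)) + phi g h n \<sigma> i (M (\<sigma> i))"
    unfolding m_def M_def by (auto simp: min_def max_def)
  have "(\<Sum>i=1..n. phi g h n \<sigma> i (x (\<sigma> i))) + (\<Sum>i=1..n. phi g h n \<sigma> i (y (\<sigma> i)))
      = (\<Sum>i=1..n. phi g h n \<sigma> i (m (\<sigma> i))) + (\<Sum>i=1..n. phi g h n \<sigma> i (M (\<sigma> i)))"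
    by (simp add: sum.distrib[symmetric] pt)
  then show "f x + f y = f (\<lambda>i. min (x i) (y i)) + f (\<lambda>i. max (x i) (y i))"
    using iii_sum[OF c s xc xs] iii_sum[OF c s yc ys] iii_sum[OF c s mc(1) ms(1)] iii_sum[OF c s mc(2) ms(2)]
    unfolding m_def[symmetric] M_def[symmetric] shift0_def by linarith
qed

theorem theorem11:
  fixes n :: nat and I :: "real set" and f :: "(nat \<Rightarrow> real) \<Rightarrow> real"
  assumes "is_interval I" and "0 \<in> I"
  shows "(comod n I f \<longleftrightarrow> (\<exists>g h. cond_ii n I f g h))
       \<and> (comod n I f \<longleftrightarrow> (\<exists>g h. cond_iii n I f g h))
       \<and> (comod n I f \<longrightarrow> cond_ii n I f f f \<and> cond_iii n I f f f)"
  using comod_ii[OF _ assms(2)] comod_iii[OF _ assms(2)] ii_comod[OF _ assms(2)] iii_comod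
  by blast

end
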